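(* Let $\mathbb{F}$ be a field with more than $(l+2)/2$ elements, and let $\Phi: M_n(\mathbb{F}) \to M_l(\mathbb{F})$ be a linear map. Then $\Phi(X)\Phi(Y) = 0$ for all $X,Y \in M_n(\mathbb{F})$ if and only if there exist nonnegative integers $p,q,u,v$ with $2p+q = l$, $u\le p$, $v\le q$, and an invertible $S_0 \in M_l(\mathbb{F})$ (all independent of $A$) such that for every $A \in M_n(\mathbb{F})$, $$S_0^{-1}\Phi(A)S_0 = \begin{pmatrix} 0_p & Z_{12} & Z_{13}\\ 0_p & 0_p & 0\\ 0 & Z_{32} & 0_q\end{pmatrix},\quad Z_{13} = \begin{pmatrix} \hat Z_{13} & 0_{u,q-v}\\ 0_{p-u,v} & 0_{p-u,q-v}\end{pmatrix},\quad Z_{32} = \begin{pmatrix} 0_{v,u} & 0_{v,p-u}\\ 0_{q-v,u} & \hat Z_{32}\end{pmatrix},$$ where $Z_{12}\in M_p(\mathbb{F})$, $\hat Z_{13}$ is $u\times v$ and $\hat Z_{32}$ is $(q-v)\times(p-u)$ (all depending on $A$), the block rows/columns having sizes $p,p,q$.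
   Context: $0_{a,b}$ denotes the $a\times b$ zero matrix and $0_p$ the $p\times p$ zero matrix. *)

theory Defs
  imports "Jordan_Normal_Form.Matrix"
begin

definition block3_mat :: "nat \<Rightarrow> nat \<Rightarrow> nat \<Rightarrow>
    'a mat \<Rightarrow> 'a mat \<Rightarrow> 'a mat \<Rightarrow>
    'a mat \<Rightarrow> 'a mat \<Rightarrow> 'a mat \<Rightarrow>
    'a mat \<Rightarrow> 'a mat \<Rightarrow> 'a mat \<Rightarrow> 'a mat" where
  "block3_mat a b c Z11 Z12 Z13 Z21 Z22 Z23 Z31 Z32 Z33 =
     mat (a+b+c) (a+b+c) (\<lambda>(i,j).
       if i < a then
         (if j < a then Z11 $$ (i,j) else if j < a+b then Z12 $$ (i,j-a) else Z13 $$ (i,j-a-b))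
       else if i < a+b then
         (if j < a then Z21 $$ (i-a,j) else if j < a+b then Z22 $$ (i-a,j-a) else Z23 $$ (i-a,j-a-b))
       else
         (if j < a then Z31 $$ (i-a-b,j) else if j < a+b then Z32 $$ (i-a-b,j-a) else Z33 $$ (i-a-b,j-a-b)))"

definition linear_mat_map :: "nat \<Rightarrow> nat \<Rightarrow> ('a::field mat \<Rightarrow> 'a mat) \<Rightarrow> bool" where
  "linear_mat_map n l \<Phi> \<longleftrightarrow>
     (\<forall>A \<in> carrier_mat n n. \<Phi> A \<in> carrier_mat l l) \<and>
     (\<forall>A \<in> carrier_mat n n. \<forall>B \<in> carrier_mat n n. \<Phi> (A + B) = \<Phi> A + \<Phi> B) \<and>
     (\<forall>c. \<forall>A \<in> carrier_mat n n. \<Phi> (c \<cdot>\<^sub>m A) = c \<cdot>\<^sub>m \<Phi> A)"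

end

theory Submission imports Defs "Jordan_Normal_Form.Gauss_Jordan_Elimination" "Jordan_Normal_Form.Determinant"
begin

definition allowed :: "nat \<Rightarrow> nat \<Rightarrow> nat \<Rightarrow> nat \<Rightarrow> nat \<Rightarrow> bool" where
  "allowed p u v s t \<longleftrightarrow> (s<p \<and> p\<le>t \<and> t<2*p) \<or> (s<u \<and> 2*p \<le> t \<and> t < 2*p+v) \<or> (2*p+v \<le> s \<and> p+u \<le> t \<and> t < 2*p)"

lemma block_zero:
  assumes Z: "Z12 \<in> carrier_mat p p" "Zh13 \<in> carrier_mat u v" "Zh32 \<in> carrier_mat (q - v) (p - u)"
   and uv: "u \<le> p" "v \<le> q"
   and N: "N = block3_mat p p q
                (0\<^sub>m p p) Z12 (four_block_mat Zh13 (0\<^sub>m u (q - v)) (0\<^sub>m (p - u) v) (0\<^sub>m (p - u) (q - v)))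
                (0\<^sub>m p p) (0\<^sub>m p p) (0\<^sub>m p q)
                (0\<^sub>m q p) (four_block_mat (0\<^sub>m v u) (0\<^sub>m v (p - u)) (0\<^sub>m (q - v) u) Zh32) (0\<^sub>m q q)"
   and st: "s < 2*p+q" "t < 2*p+q" and nz: "N $$ (s,t) \<noteq> 0"
  shows "allowed p u v s t"
  using nz Z uv st unfolding N block3_mat_def allowed_def
  by (auto simp: split: if_splits)

lemma block_intro:
  assumes N: "N \<in> carrier_mat l l" and l: "l = 2*p+q" and uv: "u \<le> p" "v \<le> q"
   and z: "\<And>s t. s < l \<Longrightarrow> t < l \<Longrightarrow> \<not> allowed p u v s t \<Longrightarrow> N $$ (s,t) = 0"
  shows "\<exists>Z12 \<in> carrier_mat p p. \<exists>Zh13 \<in> carrier_mat u v. \<exists>Zh32 \<in> carrier_mat (q - v) (p - u).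
            N = block3_mat p p q
                (0\<^sub>m p p) Z12 (four_block_mat Zh13 (0\<^sub>m u (q - v)) (0\<^sub>m (p - u) v) (0\<^sub>m (p - u) (q - v)))
                (0\<^sub>m p p) (0\<^sub>m p p) (0\<^sub>m p q)
                (0\<^sub>m q p) (four_block_mat (0\<^sub>m v u) (0\<^sub>m v (p - u)) (0\<^sub>m (q - v) u) Zh32) (0\<^sub>m q q)"
proof (intro bexI)
  show "N = block3_mat p p q
                (0\<^sub>m p p) (mat p p (\<lambda>(i,j). N$$(i,j+p))) (four_block_mat (mat u v (\<lambda>(i,j). N$$(i, j+2*p))) (0\<^sub>m u (q - v)) (0\<^sub>m (p - u) v) (0\<^sub>m (p - u) (q - v)))
                (0\<^sub>m p p) (0\<^sub>m p p) (0\<^sub>m p q)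
                (0\<^sub>m q p) (four_block_mat (0\<^sub>m v u) (0\<^sub>m v (p - u)) (0\<^sub>m (q - v) u) (mat (q-v) (p-u) (\<lambda>(i,j). N$$(i+2*p+v, j+p+u)))) (0\<^sub>m q q)"
  proof (rule eq_matI)
    fix s t assume st: "s < dim_row (block3_mat p p q (0\<^sub>m p p) (mat p p (\<lambda>(i,j). N$$(i,j+p))) (four_block_mat (mat u v (\<lambda>(i,j). N$$(i, j+2*p))) (0\<^sub>m u (q - v)) (0\<^sub>m (p - u) v) (0\<^sub>m (p - u) (q - v)))
                (0\<^sub>m p p) (0\<^sub>m p p) (0\<^sub>m p q)
                (0\<^sub>m q p) (four_block_mat (0\<^sub>m v u) (0\<^sub>m v (p - u)) (0\<^sub>m (q - v) u) (mat (q-v) (p-u) (\<lambda>(i,j). N$$(i+2*p+v, j+p+u)))) (0\<^sub>m q q))"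
      "t < dim_col (block3_mat p p q (0\<^sub>m p p) (mat p p (\<lambda>(i,j). N$$(i,j+p))) (four_block_mat (mat u v (\<lambda>(i,j). N$$(i, j+2*p))) (0\<^sub>m u (q - v)) (0\<^sub>m (p - u) v) (0\<^sub>m (p - u) (q - v)))
                (0\<^sub>m p p) (0\<^sub>m p p) (0\<^sub>m p q)
                (0\<^sub>m q p) (four_block_mat (0\<^sub>m v u) (0\<^sub>m v (p - u)) (0\<^sub>m (q - v) u) (mat (q-v) (p-u) (\<lambda>(i,j). N$$(i+2*p+v, j+p+u)))) (0\<^sub>m q q))"
    hence s: "s < l" and t: "t < l" using l by (auto simp: block3_mat_def)
    have zz: "\<not> allowed p u v s t \<Longrightarrow> N $$ (s,t) = 0" using z s t by blast
    show "N $$ (s,t) = block3_mat p p q (0\<^sub>m p p) (mat p p (\<lambda>(i,j). N$$(i,j+p))) (four_block_mat (mat u v (\<lambda>(i,j). N$$(i, j+2*p))) (0\<^sub>m u (q - v)) (0\<^sub>m (p - u) v) (0\<^sub>m (p - u) (q - v)))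
                (0\<^sub>m p p) (0\<^sub>m p p) (0\<^sub>m p q)
                (0\<^sub>m q p) (four_block_mat (0\<^sub>m v u) (0\<^sub>m v (p - u)) (0\<^sub>m (q - v) u) (mat (q-v) (p-u) (\<lambda>(i,j). N$$(i+2*p+v, j+p+u)))) (0\<^sub>m q q) $$ (s,t)"
      using s t l uv unfolding block3_mat_def
      by (auto simp: ac_simps intro!: zz simp: allowed_def)
  qed (use N l in \<open>auto simp: block3_mat_def\<close>)
qed auto


definition Emat :: "nat \<Rightarrow> nat \<Rightarrow> nat \<Rightarrow> 'a::{zero,one} mat" where
  "Emat n k j = mat n n (\<lambda>(a,b). if a = k \<and> b = j then 1 else 0)"

lemma idx_bound: "a < n \<Longrightarrow> b < (n::nat) \<Longrightarrow> a*n+b < n*n"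
proof -
  assume "a < n" "b < n"
  hence "a*n + b < a*n + n" by simp
  also have "\<dots> = (a+1)*n" by simp
  also have "\<dots> \<le> n*n" using \<open>a<n\<close> by (intro mult_le_mono1) simp
  finally show ?thesis .
qed

lemma idx_eq: "b < (n::nat) \<Longrightarrow> (a*n+b = m) \<longleftrightarrow> (a = m div n \<and> b = m mod n)"
  by auto

lemma basis_vanish:
  fixes g :: "'a::field mat \<Rightarrow> 'a"
  assumes add: "\<And>A B. A \<in> carrier_mat n n \<Longrightarrow> B \<in> carrier_mat n n \<Longrightarrow> g (A+B) = g A + g B"
    and sm: "\<And>c A. A \<in> carrier_mat n n \<Longrightarrow> g (c \<cdot>\<^sub>m A) = c * g A"
    and e: "\<And>k j. k < n \<Longrightarrow> j < n \<Longrightarrow> g (Emat n k j) = 0"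
    and A: "A \<in> carrier_mat n n"
  shows "g A = 0"
proof -
  define tr where "tr m = mat n n (\<lambda>(a,b). if a*n+b < m then A$$(a,b) else 0)" for m
  have tc: "tr m \<in> carrier_mat n n" for m unfolding tr_def by auto
  have "g (tr m) = 0" for m
  proof (induction m)
    case 0
    have "tr 0 = 0 \<cdot>\<^sub>m A" unfolding tr_def using A by (intro eq_matI) auto
    then show ?case using sm[OF A, of 0] by simp
  next
    case (Suc m)
    show ?case
    proof (cases "m < n*n")
      case True
      have npos: "0 < n" using True by (cases n) auto
      have md: "m div n < n" using True by (simp add: less_mult_imp_div_less)
      have mm: "m mod n < n" using npos by simp
      have "tr (Suc m) = tr m + A$$(m div n, m mod n) \<cdot>\<^sub>m Emat n (m div n) (m mod n)"
      proof (intro eq_matI)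
        fix a b assume ab: "a < dim_row (tr m + A$$(m div n, m mod n) \<cdot>\<^sub>m Emat n (m div n) (m mod n))"
          "b < dim_col (tr m + A$$(m div n, m mod n) \<cdot>\<^sub>m Emat n (m div n) (m mod n))"
        hence a: "a < n" and b: "b < n" by (auto simp: Emat_def)
        have "(a*n+b < Suc m) = (a*n+b < m \<or> a*n+b = m)" by auto
        then show "tr (Suc m) $$ (a,b) = (tr m + A$$(m div n, m mod n) \<cdot>\<^sub>m Emat n (m div n) (m mod n)) $$ (a,b)"
          using a b idx_eq[OF b, of a m] unfolding tr_def Emat_def by auto
      qed (auto simp: tr_def Emat_def)
      then show ?thesis using Suc add[OF tc, of "A$$(m div n, m mod n) \<cdot>\<^sub>m Emat n (m div n) (m mod n)"]
        sm[of "Emat n (m div n) (m mod n)"] e[OF md mm] by (simp add: Emat_def)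
    next
      case False
      have "tr (Suc m) = tr m" unfolding tr_def
        by (intro eq_matI) (use False idx_bound in \<open>auto\<close>, (meson idx_bound less_le_trans not_le)+)
      then show ?thesis using Suc by simp
    qed
  qed
  moreover have "tr (n*n) = A" unfolding tr_def using A idx_bound by (intro eq_matI) auto
  ultimately show ?thesis by metis
qed


lemma decode:
  fixes t n l :: nat
  assumes "t < n*n*l"
  shows "t div (n*l) < n" "t mod l < l" "(t div l) mod n < n"
proof -
  have lpos: "0 < l" using assms by (cases l) auto
  have npos: "0 < n" using assms by (cases n) auto
  show "t mod l < l" using lpos by simp
  show "(t div l) mod n < n" using npos by simp
  show "t div (n*l) < n" using assms by (intro less_mult_imp_div_less) (simp add: mult.assoc)
qed

lemma encode:
  fixes k j c n l :: nat
  assumes k: "k < n" and j: "j < n" and c: "c < l"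
  shows "(k*n+j)*l+c < n*n*l" "((k*n+j)*l+c) div (n*l) = k" "((k*n+j)*l+c) mod l = c"
    "(((k*n+j)*l+c) div l) mod n = j"
proof -
  have d: "((k*n+j)*l+c) div l = k*n+j" using c by simp
  show "((k*n+j)*l+c) mod l = c" using c by simp
  show "(((k*n+j)*l+c) div l) mod n = j" using d j by simp
  have "((k*n+j)*l+c) div (n*l) = ((k*n+j)*l+c) div l div n"
    by (simp add: div_mult2_eq mult.commute)
  also have "\<dots> = k" using d j by simp
  finally show "((k*n+j)*l+c) div (n*l) = k" .
  have "(k*n+j)*l+c < (k*n+j)*l + l" using c by simp
  also have "\<dots> = (k*n+j+1)*l" by simp
  also have "\<dots> \<le> (n*n)*l" using idx_bound[OF k j] by (intro mult_le_mono1) simp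
  finally show "(k*n+j)*l+c < n*n*l" by simp
qed

lemma exists_P:
  fixes \<Phi> :: "'a::field mat \<Rightarrow> 'a mat"
  assumes lin: "linear_mat_map n l \<Phi>"
    and zero: "\<forall>X \<in> carrier_mat n n. \<forall>Y \<in> carrier_mat n n. \<Phi> X * \<Phi> Y = 0\<^sub>m l l"
  shows "\<exists>P Q r. P \<in> carrier_mat l l \<and> Q \<in> carrier_mat l l \<and> P * Q = 1\<^sub>m l \<and> Q * P = 1\<^sub>m l \<and> r \<le> l \<and>
     (\<forall>A \<in> carrier_mat n n. \<forall>i<l. \<forall>j<l. (r \<le> i \<or> j < r) \<longrightarrow> (P * \<Phi> A * Q) $$ (i,j) = 0)"
proof -
  have Pc: "\<And>A. A \<in> carrier_mat n n \<Longrightarrow> \<Phi> A \<in> carrier_mat l l"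
    and Padd: "\<And>A B. A \<in> carrier_mat n n \<Longrightarrow> B \<in> carrier_mat n n \<Longrightarrow> \<Phi> (A + B) = \<Phi> A + \<Phi> B"
    and Psm: "\<And>c A. A \<in> carrier_mat n n \<Longrightarrow> \<Phi> (c \<cdot>\<^sub>m A) = c \<cdot>\<^sub>m \<Phi> A"
    using lin unfolding linear_mat_map_def by auto
  have Ec: "Emat n k j \<in> carrier_mat n n" for k j unfolding Emat_def by auto
  define N where "N = n*n*l"
  define R :: "'a mat" where "R = mat l N (\<lambda>(i,t). \<Phi> (Emat n (t div (n*l)) ((t div l) mod n)) $$ (i, t mod l))"
  have Rc: "R \<in> carrier_mat l N" unfolding R_def by auto
  define C where "C = gauss_jordan_single R"
  note G = gauss_jordan_single[OF Rc C_def[symmetric]]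
  have Cc: "C \<in> carrier_mat l N" using G(2) .
  from G(4) obtain P Q where CPR: "C = P * R" and Pc': "P \<in> carrier_mat l l" and Qc: "Q \<in> carrier_mat l l"
    and PQ: "P * Q = 1\<^sub>m l" and QP: "Q * P = 1\<^sub>m l" by blast
  from G(3) Cc obtain f where pf: "pivot_fun C f N" unfolding row_echelon_form_def by auto
  have dr: "dim_row C = l" using Cc by auto
  note pD = pivot_funD[OF dr pf]
  have mono: "f i = N \<Longrightarrow> i + d < l \<Longrightarrow> f (i+d) = N" for i d
  proof (induction d)
    case 0 then show ?case by simp
  next
    case (Suc d)
    hence fd: "f (i+d) = N" by simp
    have "f (Suc (i+d)) > f (i+d) \<or> f (Suc (i+d)) = N" using pD(3)[of "i+d"] Suc by simp
    moreover have "f (Suc (i+d)) \<le> N" using pD(1)[of "Suc (i+d)"] Suc by simp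
    ultimately show ?case using fd by auto
  qed
  obtain r where rl: "r \<le> l" and rf: "\<And>i. i < l \<Longrightarrow> (f i < N) = (i < r)"
  proof (cases "\<exists>i<l. f i = N")
    case True
    define r where "r = (LEAST i. i < l \<and> f i = N)"
    have r1: "r < l \<and> f r = N" unfolding r_def using True by (metis (mono_tags, lifting) LeastI)
    show ?thesis
    proof (rule that[of r])
      show "r \<le> l" using r1 by simp
      fix i assume i: "i < l"
      show "(f i < N) = (i < r)"
      proof
        assume "f i < N"
        then show "i < r" using mono[of r "i - r"] r1 i by (cases "r \<le> i") auto
      next
        assume "i < r"
        hence "f i \<noteq> N" unfolding r_def using i not_less_Least by blast
        then show "f i < N" using pD(1)[OF i] by simp
      qed
    qed
  next
    case False
    show ?thesis by (rule that[of l]) (use False pD(1) in \<open>auto simp: le_less\<close>)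
  qed
  have Cent: "C $$ (i,t) = (P * \<Phi> (Emat n (t div (n*l)) ((t div l) mod n))) $$ (i, t mod l)"
    if i: "i < l" and t: "t < N" for i t
  proof -
    note dc = decode[OF t[unfolded N_def]]
    let ?B = "\<Phi> (Emat n (t div (n*l)) ((t div l) mod n))"
    have Bc: "?B \<in> carrier_mat l l" by (rule Pc[OF Ec])
    have "col R t = col ?B (t mod l)"
      using Bc t dc unfolding R_def by (intro eq_vecI) auto
    then show ?thesis unfolding CPR using i t Pc' Rc Bc dc by simp
  qed
  have Z1: "(P * \<Phi> A) $$ (i,c) = 0" if A: "A \<in> carrier_mat n n" and i: "r \<le> i" "i < l" and c: "c < l" for A i c
  proof (rule basis_vanish[of n "\<lambda>A. (P * \<Phi> A) $$ (i,c)"])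
    fix A B :: "'a mat" assume A: "A \<in> carrier_mat n n" and B: "B \<in> carrier_mat n n"
    show "(P * \<Phi> (A + B)) $$ (i, c) = (P * \<Phi> A) $$ (i, c) + (P * \<Phi> B) $$ (i, c)"
      using Padd[OF A B] mult_add_distrib_mat[OF Pc' Pc[OF A] Pc[OF B]] Pc[OF A] Pc[OF B] Pc' i c by simp
  next
    fix d and A :: "'a mat" assume A: "A \<in> carrier_mat n n"
    show "(P * \<Phi> (d \<cdot>\<^sub>m A)) $$ (i, c) = d * (P * \<Phi> A) $$ (i, c)"
      using Psm[OF A] mult_smult_distrib[OF Pc' Pc[OF A]] Pc[OF A] Pc' i c by simp
  next
    fix k j assume k: "k < n" and j: "j < n"
    note en = encode[OF k j c]
    have "f i = N" using rf[OF i(2)] i pD(1)[OF i(2)] by auto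
    hence "C $$ (i, (k*n+j)*l+c) = 0" using pD(2)[OF i(2)] en N_def by auto
    then show "(P * \<Phi> (Emat n k j)) $$ (i, c) = 0" using Cent[OF i(2), of "(k*n+j)*l+c"] en N_def by simp
  qed (rule A)
  have Z2: "(P * \<Phi> A * Q) $$ (i',i) = 0" if A: "A \<in> carrier_mat n n" and i: "i < r" and i': "i' < l" for A i i'
  proof -
    have il: "i < l" using i rl by simp
    define t where "t = f i"
    have tN: "t < N" using rf[OF il] i t_def by simp
    note dc = decode[OF tN[unfolded N_def]]
    define B where "B = \<Phi> (Emat n (t div (n*l)) ((t div l) mod n))"
    define c0 where "c0 = t mod l"
    have c0l: "c0 < l" using dc c0_def by simp
    have Bc: "B \<in> carrier_mat l l" unfolding B_def by (rule Pc[OF Ec])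
    have colC: "col C t = unit_vec l i"
      using pD(4)[OF il] pD(5)[OF il] tN Cc t_def by (intro eq_vecI) (auto simp: unit_vec_def)
    have "col R t = col B c0"
      using Bc tN dc unfolding R_def B_def c0_def by (intro eq_vecI) auto
    moreover have "col C t = P *\<^sub>v col R t" unfolding CPR using col_mult2[OF Pc' Rc tN] .
    ultimately have uv: "unit_vec l i = P *\<^sub>v col B c0"
      using colC by simp
    have MB: "\<Phi> A *\<^sub>v col B c0 = 0\<^sub>v l"
    proof -
      have m0: "\<Phi> A * B = 0\<^sub>m l l" unfolding B_def using zero A Ec[of "t div (n*l)" "(t div l) mod n"] by blast
      have "\<Phi> A *\<^sub>v col B c0 = col (\<Phi> A * B) c0" by (rule col_mult2[OF Pc[OF A] Bc c0l, symmetric])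
      also have "\<dots> = col (0\<^sub>m l l) c0" unfolding m0 ..
      also have "\<dots> = 0\<^sub>v l" using c0l by (intro eq_vecI) auto
      finally show ?thesis .
    qed
    have cB: "col B c0 \<in> carrier_vec l" by (rule col_carrier_vec[OF c0l Bc])
    define x where "x = col B c0"
    have xc: "x \<in> carrier_vec l" unfolding x_def by (rule cB)
    have PAc: "P * \<Phi> A \<in> carrier_mat l l" by (rule mult_carrier_mat[OF Pc' Pc[OF A]])
    have Pxc: "P *\<^sub>v x \<in> carrier_vec l" by (rule mult_mat_vec_carrier[OF Pc' xc])
    define T where "T = P * \<Phi> A * Q"
    have Tc: "T \<in> carrier_mat l l" unfolding T_def by (rule mult_carrier_mat[OF PAc Qc])
    have "T *\<^sub>v unit_vec l i = (P * \<Phi> A) *\<^sub>v (Q *\<^sub>v (P *\<^sub>v x))"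
      unfolding T_def uv x_def[symmetric] by (rule assoc_mult_mat_vec[OF PAc Qc Pxc])
    also have "Q *\<^sub>v (P *\<^sub>v x) = x"
      using assoc_mult_mat_vec[OF Qc Pc' xc] QP xc by simp
    also have "(P * \<Phi> A) *\<^sub>v x = P *\<^sub>v (\<Phi> A *\<^sub>v x)"
      by (rule assoc_mult_mat_vec[OF Pc' Pc[OF A] xc])
    also have "\<Phi> A *\<^sub>v x = 0\<^sub>v l" using MB x_def by simp
    also have "P *\<^sub>v 0\<^sub>v l = 0\<^sub>v l" using Pc' by auto
    finally have tz: "T *\<^sub>v unit_vec l i = 0\<^sub>v l" .
    have "(T *\<^sub>v unit_vec l i) $ i' = row T i' \<bullet> unit_vec l i" using i' Tc by simp
    also have "\<dots> = row T i' $ i" using il by simp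
    also have "\<dots> = T $$ (i', i)" using i' il Tc by simp
    finally have "T $$ (i', i) = (T *\<^sub>v unit_vec l i) $ i'" ..
    also have "\<dots> = 0" unfolding tz using i' by simp
    finally show ?thesis unfolding T_def .
  qed
  have main: "\<forall>A \<in> carrier_mat n n. \<forall>i<l. \<forall>j<l. (r \<le> i \<or> j < r) \<longrightarrow> (P * \<Phi> A * Q) $$ (i,j) = 0"
  proof (intro ballI allI impI)
    fix A :: "'a mat" and i j assume A: "A \<in> carrier_mat n n" and ij: "i < l" "j < l" "r \<le> i \<or> j < r"
    show "(P * \<Phi> A * Q) $$ (i, j) = 0"
    proof (cases "r \<le> i")
      case True
      have r0: "row (P * \<Phi> A) i = 0\<^sub>v l" using Z1[OF A True ij(1)] Pc' Pc[OF A] ij by (intro eq_vecI) auto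
      have e1: "(P * \<Phi> A * Q) $$ (i,j) = row (P*\<Phi> A) i \<bullet> col Q j"
        using ij Pc' Pc[OF A] Qc by (simp del: assoc_mult_mat)
      have cq: "col Q j \<in> carrier_vec l" by (rule col_carrier_vec[OF ij(2) Qc])
      show ?thesis unfolding e1 r0 using scalar_prod_left_zero[OF cq] .
    next
      case False
      hence "j < r" using ij by simp
      then show ?thesis using Z2[OF A, of j i] ij(1) by blast
    qed
  qed
  show ?thesis
    by (rule exI[of _ P], rule exI[of _ Q], rule exI[of _ r]) (intro conjI; fact)
qed


lemma sum_ind_left: "a < (l::nat) \<Longrightarrow> (\<Sum>w\<in>{0..<l}. (if w = a then 1 else 0) * g w) = (g a :: 'a::semiring_1)"
proof -
  assume a: "a < l"
  have "(\<Sum>w\<in>{0..<l}. (if w = a then 1 else 0) * g w) = (\<Sum>w\<in>{0..<l}. if w = a then g w else 0)"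
    by (rule sum.cong) auto
  also have "\<dots> = g a" using a by (subst sum.delta) auto
  finally show ?thesis .
qed

lemma sum_ind_right: "a < (l::nat) \<Longrightarrow> (\<Sum>w\<in>{0..<l}. g w * (if w = a then 1 else 0)) = (g a :: 'a::semiring_1)"
proof -
  assume a: "a < l"
  have "(\<Sum>w\<in>{0..<l}. g w * (if w = a then 1 else 0)) = (\<Sum>w\<in>{0..<l}. if w = a then g w else 0)"
    by (rule sum.cong) auto
  also have "\<dots> = g a" using a by (subst sum.delta) auto
  finally show ?thesis .
qed

lemma perm_entries:
  fixes T :: "'a::comm_ring_1 mat"
  assumes Tc: "T \<in> carrier_mat l l" and pl: "\<And>s. s < l \<Longrightarrow> \<pi> s < l"
    and s: "s < l" and t: "t < l"
  shows "(mat l l (\<lambda>(s,w). if w = \<pi> s then 1 else 0) * T * mat l l (\<lambda>(w,s). if w = \<pi> s then 1 else 0)) $$ (s,t)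
     = T $$ (\<pi> s, \<pi> t)"
proof -
  define PmT :: "'a mat" where "PmT = mat l l (\<lambda>(s,w). if w = \<pi> s then 1 else 0)"
  define Pm :: "'a mat" where "Pm = mat l l (\<lambda>(w,s). if w = \<pi> s then 1 else 0)"
  have 1: "(PmT * T) $$ (s', j) = T $$ (\<pi> s', j)" if s': "s' < l" and j: "j < l" for s' j
  proof -
    have "(PmT * T) $$ (s', j) = row PmT s' \<bullet> col T j" using s' j Tc unfolding PmT_def by simp
    also have "\<dots> = (\<Sum>w\<in>{0..<l}. (if w = \<pi> s' then 1 else 0) * T $$ (w, j))"
      unfolding scalar_prod_def using s' j Tc unfolding PmT_def by (intro sum.cong) auto
    also have "\<dots> = T $$ (\<pi> s', j)" by (rule sum_ind_left[OF pl[OF s']])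
    finally show ?thesis .
  qed
  have PTc: "PmT * T \<in> carrier_mat l l" unfolding PmT_def by (rule mult_carrier_mat[OF _ Tc]) simp
  have "(PmT * T * Pm) $$ (s,t) = row (PmT * T) s \<bullet> col Pm t" using s t PTc unfolding Pm_def by (subst index_mult_mat(1)) auto
  also have "\<dots> = (\<Sum>w\<in>{0..<l}. T $$ (\<pi> s, w) * (if w = \<pi> t then 1 else 0))"
    unfolding scalar_prod_def using s t PTc 1 pl[OF s] carrier_matD[OF PTc] unfolding Pm_def by (intro sum.cong) auto
  also have "\<dots> = T $$ (\<pi> s, \<pi> t)" by (rule sum_ind_right[OF pl[OF t]])
  finally show ?thesis unfolding PmT_def Pm_def .
qed

lemma prod_zero:
  fixes N1 N2 :: "'a::field mat"
  assumes N1: "N1 \<in> carrier_mat l l" and N2: "N2 \<in> carrier_mat l l" and uv: "u \<le> p"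
    and z1: "\<And>s t. s < l \<Longrightarrow> t < l \<Longrightarrow> N1 $$ (s,t) \<noteq> 0 \<Longrightarrow> allowed p u v s t"
    and z2: "\<And>s t. s < l \<Longrightarrow> t < l \<Longrightarrow> N2 $$ (s,t) \<noteq> 0 \<Longrightarrow> allowed p u v s t"
  shows "N1 * N2 = 0\<^sub>m l l"
proof (rule eq_matI)
  fix s t assume st: "s < dim_row (0\<^sub>m l l :: 'a mat)" "t < dim_col (0\<^sub>m l l :: 'a mat)"
  hence s: "s < l" and t: "t < l" by auto
  have "(N1 * N2) $$ (s,t) = row N1 s \<bullet> col N2 t" using s t N1 N2 by simp
  also have "\<dots> = (\<Sum>k\<in>{0..<l}. N1 $$ (s,k) * N2 $$ (k,t))"
    unfolding scalar_prod_def using s t N1 N2 by (intro sum.cong) auto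
  also have "\<dots> = 0"
  proof (rule sum.neutral, rule ballI)
    fix k assume k: "k \<in> {0..<l}"
    show "N1 $$ (s,k) * N2 $$ (k,t) = 0"
    proof (rule ccontr)
      assume "N1 $$ (s,k) * N2 $$ (k,t) \<noteq> 0"
      hence "N1 $$ (s,k) \<noteq> 0" "N2 $$ (k,t) \<noteq> 0" by auto
      from z1[OF s _ this(1)] z2[OF _ t this(2)] k uv show False unfolding allowed_def by auto
    qed
  qed
  finally show "(N1 * N2) $$ (s,t) = 0\<^sub>m l l $$ (s,t)" using s t by simp
qed (use N1 N2 in auto)


lemma conj_back:
  fixes M S0 S0inv :: "'a::field mat"
  assumes S: "S0 \<in> carrier_mat l l" and Si: "S0inv \<in> carrier_mat l l" and M: "M \<in> carrier_mat l l"
    and I: "S0 * S0inv = 1\<^sub>m l"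
  shows "S0 * (S0inv * M * S0) * S0inv = M"
proof -
  have MS: "M * S0 \<in> carrier_mat l l" using M S by simp
  have "S0inv * M * S0 = S0inv * (M * S0)" by (rule assoc_mult_mat[OF Si M S])
  hence "S0 * (S0inv * M * S0) = (S0 * S0inv) * (M * S0)" using assoc_mult_mat[OF S Si MS] by simp
  also have "\<dots> = M * S0" unfolding I by (rule left_mult_one_mat[OF MS])
  finally have "S0 * (S0inv * M * S0) * S0inv = M * S0 * S0inv" by simp
  also have "\<dots> = M * (S0 * S0inv)" by (rule assoc_mult_mat[OF M S Si])
  also have "\<dots> = M" unfolding I by (rule right_mult_one_mat[OF M])
  finally show ?thesis .
qed

lemma conj_prod:
  fixes N1 N2 S0 S0inv :: "'a::field mat"
  assumes S: "S0 \<in> carrier_mat l l" and Si: "S0inv \<in> carrier_mat l l"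
    and N1: "N1 \<in> carrier_mat l l" and N2: "N2 \<in> carrier_mat l l"
    and I: "S0inv * S0 = 1\<^sub>m l"
  shows "(S0 * N1 * S0inv) * (S0 * N2 * S0inv) = S0 * (N1 * N2) * S0inv"
proof -
  have SN1: "S0 * N1 \<in> carrier_mat l l" using S N1 by simp
  have SN2: "S0 * N2 \<in> carrier_mat l l" using S N2 by simp
  have R2: "S0 * N2 * S0inv \<in> carrier_mat l l" using SN2 Si by simp
  have N2S: "N2 * S0inv \<in> carrier_mat l l" using N2 Si by simp
  have NN: "N1 * N2 \<in> carrier_mat l l" using N1 N2 by simp
  have a: "(S0 * N1 * S0inv) * (S0 * N2 * S0inv) = (S0 * N1) * (S0inv * (S0 * N2 * S0inv))"
    by (rule assoc_mult_mat[OF SN1 Si R2])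
  have "S0inv * (S0 * N2 * S0inv) = (S0inv * (S0 * N2)) * S0inv" by (rule assoc_mult_mat[OF Si SN2 Si, symmetric])
  also have "S0inv * (S0 * N2) = (S0inv * S0) * N2" by (rule assoc_mult_mat[OF Si S N2, symmetric])
  also have "\<dots> = N2" unfolding I by (rule left_mult_one_mat[OF N2])
  finally have b: "S0inv * (S0 * N2 * S0inv) = N2 * S0inv" .
  have "(S0 * N1) * (N2 * S0inv) = S0 * (N1 * (N2 * S0inv))" by (rule assoc_mult_mat[OF S N1 N2S])
  also have "N1 * (N2 * S0inv) = (N1 * N2) * S0inv" by (rule assoc_mult_mat[OF N1 N2 Si, symmetric])
  also have "S0 * ((N1 * N2) * S0inv) = S0 * (N1 * N2) * S0inv" by (rule assoc_mult_mat[OF S NN Si, symmetric])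
  finally show ?thesis unfolding a b .
qed

theorem theorem3p8:
  fixes \<Phi> :: "'a::field mat \<Rightarrow> 'a mat" and n l :: nat
  assumes card: "infinite (UNIV :: 'a set) \<or> real (card (UNIV :: 'a set)) > (real l + 2) / 2"
    and lin: "linear_mat_map n l \<Phi>"
  shows "(\<forall>X \<in> carrier_mat n n. \<forall>Y \<in> carrier_mat n n. \<Phi> X * \<Phi> Y = 0\<^sub>m l l) \<longleftrightarrow>
    (\<exists>p q u v :: nat. 2 * p + q = l \<and> u \<le> p \<and> v \<le> q \<and>
      (\<exists>S0 \<in> carrier_mat l l. \<exists>S0inv \<in> carrier_mat l l. S0 * S0inv = 1\<^sub>m l \<and> S0inv * S0 = 1\<^sub>m l \<and>
        (\<forall>A \<in> carrier_mat n n.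
          (\<exists>Z12 \<in> carrier_mat p p. \<exists>Zh13 \<in> carrier_mat u v. \<exists>Zh32 \<in> carrier_mat (q - v) (p - u).
            S0inv * \<Phi> A * S0 =
              block3_mat p p q
                (0\<^sub>m p p) Z12 (four_block_mat Zh13 (0\<^sub>m u (q - v)) (0\<^sub>m (p - u) v) (0\<^sub>m (p - u) (q - v)))
                (0\<^sub>m p p) (0\<^sub>m p p) (0\<^sub>m p q)
                (0\<^sub>m q p) (four_block_mat (0\<^sub>m v u) (0\<^sub>m v (p - u)) (0\<^sub>m (q - v) u) Zh32) (0\<^sub>m q q)))))"
  (is "?L \<longleftrightarrow> ?R")
proof
  have Pc: "\<And>A. A \<in> carrier_mat n n \<Longrightarrow> \<Phi> A \<in> carrier_mat l l"
    using lin unfolding linear_mat_map_def by auto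
  assume H: ?L
  from exists_P[OF lin H] obtain P Q r where Pc': "P \<in> carrier_mat l l" and Qc: "Q \<in> carrier_mat l l"
    and PQ: "P * Q = 1\<^sub>m l" and QP: "Q * P = 1\<^sub>m l" and rl: "r \<le> l"
    and main: "\<And>A i j. A \<in> carrier_mat n n \<Longrightarrow> i < l \<Longrightarrow> j < l \<Longrightarrow> r \<le> i \<or> j < r \<Longrightarrow> (P * \<Phi> A * Q) $$ (i,j) = 0"
    by blast
  have Tc: "P * \<Phi> A * Q \<in> carrier_mat l l" if "A \<in> carrier_mat n n" for A
    by (rule mult_carrier_mat[OF mult_carrier_mat[OF Pc' Pc[OF that]] Qc])
  show ?R
  proof (cases "2*r \<le> l")
    case True
    have form: "\<forall>A \<in> carrier_mat n n.
          (\<exists>Z12 \<in> carrier_mat r r. \<exists>Zh13 \<in> carrier_mat r (l-2*r). \<exists>Zh32 \<in> carrier_mat ((l-2*r) - (l-2*r)) (r - r).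
            P * \<Phi> A * Q =
              block3_mat r r (l-2*r)
                (0\<^sub>m r r) Z12 (four_block_mat Zh13 (0\<^sub>m r ((l-2*r) - (l-2*r))) (0\<^sub>m (r - r) (l-2*r)) (0\<^sub>m (r - r) ((l-2*r) - (l-2*r))))
                (0\<^sub>m r r) (0\<^sub>m r r) (0\<^sub>m r (l-2*r))
                (0\<^sub>m (l-2*r) r) (four_block_mat (0\<^sub>m (l-2*r) r) (0\<^sub>m (l-2*r) (r - r)) (0\<^sub>m ((l-2*r) - (l-2*r)) r) Zh32) (0\<^sub>m (l-2*r) (l-2*r)))"
    proof
      fix A :: "'a mat" assume A: "A \<in> carrier_mat n n"
      show "\<exists>Z12 \<in> carrier_mat r r. \<exists>Zh13 \<in> carrier_mat r (l-2*r). \<exists>Zh32 \<in> carrier_mat ((l-2*r) - (l-2*r)) (r - r).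
            P * \<Phi> A * Q =
              block3_mat r r (l-2*r)
                (0\<^sub>m r r) Z12 (four_block_mat Zh13 (0\<^sub>m r ((l-2*r) - (l-2*r))) (0\<^sub>m (r - r) (l-2*r)) (0\<^sub>m (r - r) ((l-2*r) - (l-2*r))))
                (0\<^sub>m r r) (0\<^sub>m r r) (0\<^sub>m r (l-2*r))
                (0\<^sub>m (l-2*r) r) (four_block_mat (0\<^sub>m (l-2*r) r) (0\<^sub>m (l-2*r) (r - r)) (0\<^sub>m ((l-2*r) - (l-2*r)) r) Zh32) (0\<^sub>m (l-2*r) (l-2*r))"
      proof (rule block_intro[OF Tc[OF A]])
        show "l = 2*r + (l-2*r)" using True by simp
        fix s t assume st: "s < l" "t < l" and na: "\<not> allowed r r (l - 2 * r) s t"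
        have "r \<le> s \<or> t < r" using na st True unfolding allowed_def by auto
        then show "(P * \<Phi> A * Q) $$ (s,t) = 0" using main[OF A st] by blast
      qed auto
    qed
    have ex: "\<exists>S0 \<in> carrier_mat l l. \<exists>S0inv \<in> carrier_mat l l. S0 * S0inv = 1\<^sub>m l \<and> S0inv * S0 = 1\<^sub>m l \<and>
        (\<forall>A \<in> carrier_mat n n.
          (\<exists>Z12 \<in> carrier_mat r r. \<exists>Zh13 \<in> carrier_mat r (l-2*r). \<exists>Zh32 \<in> carrier_mat ((l-2*r) - (l-2*r)) (r - r).
            S0inv * \<Phi> A * S0 =
              block3_mat r r (l-2*r)
                (0\<^sub>m r r) Z12 (four_block_mat Zh13 (0\<^sub>m r ((l-2*r) - (l-2*r))) (0\<^sub>m (r - r) (l-2*r)) (0\<^sub>m (r - r) ((l-2*r) - (l-2*r))))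
                (0\<^sub>m r r) (0\<^sub>m r r) (0\<^sub>m r (l-2*r))
                (0\<^sub>m (l-2*r) r) (four_block_mat (0\<^sub>m (l-2*r) r) (0\<^sub>m (l-2*r) (r - r)) (0\<^sub>m ((l-2*r) - (l-2*r)) r) Zh32) (0\<^sub>m (l-2*r) (l-2*r))))"
      apply (rule bexI[where x=Q], rule bexI[where x=P])
        apply (rule conjI[OF QP conjI[OF PQ form]])
       apply (rule Pc')
      apply (rule Qc)
      done
    have "2 * r + (l-2*r) = l" "r \<le> r" "l-2*r \<le> l-2*r" using True by auto
    with ex show ?thesis by blast
  next
    case False
    define p where "p = l - r"
    define q where "q = 2*r - l"
    have lpq: "l = 2*p + q" using False rl unfolding p_def q_def by simp
    have rpq: "r = p + q" using False rl unfolding p_def q_def by simp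
    define pi where "pi s = (if s < p then s else if s < 2*p then s + q else s - p)" for s
    have pl: "\<And>s. s < l \<Longrightarrow> pi s < l" unfolding pi_def lpq by (auto split: if_splits)
    have pinj: "\<And>s t. s < l \<Longrightarrow> t < l \<Longrightarrow> pi s = pi t \<Longrightarrow> s = t"
      unfolding pi_def lpq by (auto split: if_splits)
    have pz: "\<And>s t. s < l \<Longrightarrow> t < l \<Longrightarrow> \<not> allowed p 0 0 s t \<Longrightarrow> r \<le> pi s \<or> pi t < r"
      unfolding pi_def lpq rpq allowed_def by (auto split: if_splits)
    define Pm :: "'a mat" where "Pm = mat l l (\<lambda>(w,s). if w = pi s then 1 else 0)"
    define PmT :: "'a mat" where "PmT = mat l l (\<lambda>(s,w). if w = pi s then 1 else 0)"
    have Pmc: "Pm \<in> carrier_mat l l" and PmTc: "PmT \<in> carrier_mat l l" unfolding Pm_def PmT_def by auto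
    have ent: "(PmT * T * Pm) $$ (s,t) = T $$ (pi s, pi t)" if "T \<in> carrier_mat l l" "s < l" "t < l" for T s t
      unfolding Pm_def PmT_def by (rule perm_entries[OF that(1) pl that(2,3)])
    have PP1: "PmT * Pm = 1\<^sub>m l"
    proof (rule eq_matI)
      fix s t assume "s < dim_row (1\<^sub>m l :: 'a mat)" "t < dim_col (1\<^sub>m l :: 'a mat)"
      hence s: "s < l" and t: "t < l" by auto
      have "PmT * Pm = PmT * 1\<^sub>m l * Pm" using PmTc by simp
      hence "(PmT * Pm) $$ (s,t) = (1\<^sub>m l :: 'a mat) $$ (pi s, pi t)" using ent[OF one_carrier_mat s t] by simp
      also have "\<dots> = (1\<^sub>m l :: 'a mat) $$ (s,t)" using pl[OF s] pl[OF t] pinj[OF s t] s t by auto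
      finally show "(PmT * Pm) $$ (s,t) = (1\<^sub>m l :: 'a mat) $$ (s,t)" .
    qed (use PmTc Pmc in auto)
    have PP2: "Pm * PmT = 1\<^sub>m l" by (rule mat_mult_left_right_inverse[OF PmTc Pmc PP1])
    define S0 where "S0 = Q * Pm"
    define S0inv where "S0inv = PmT * P"
    have S0c: "S0 \<in> carrier_mat l l" unfolding S0_def by (rule mult_carrier_mat[OF Qc Pmc])
    have S0ic: "S0inv \<in> carrier_mat l l" unfolding S0inv_def by (rule mult_carrier_mat[OF PmTc Pc'])
    have I1: "S0 * S0inv = 1\<^sub>m l"
    proof -
      have "S0 * S0inv = Q * (Pm * (PmT * P))" unfolding S0_def S0inv_def
        by (rule assoc_mult_mat[OF Qc Pmc mult_carrier_mat[OF PmTc Pc']])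
      also have "Pm * (PmT * P) = (Pm * PmT) * P" by (rule assoc_mult_mat[OF Pmc PmTc Pc', symmetric])
      also have "\<dots> = P" unfolding PP2 by (rule left_mult_one_mat[OF Pc'])
      also have "Q * P = 1\<^sub>m l" by (rule QP)
      finally show ?thesis .
    qed
    have I2: "S0inv * S0 = 1\<^sub>m l"
    proof -
      have "S0inv * S0 = PmT * (P * (Q * Pm))" unfolding S0_def S0inv_def
        by (rule assoc_mult_mat[OF PmTc Pc' mult_carrier_mat[OF Qc Pmc]])
      also have "P * (Q * Pm) = (P * Q) * Pm" by (rule assoc_mult_mat[OF Pc' Qc Pmc, symmetric])
      also have "\<dots> = Pm" unfolding PQ by (rule left_mult_one_mat[OF Pmc])
      also have "PmT * Pm = 1\<^sub>m l" by (rule PP1)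
      finally show ?thesis .
    qed
    have form: "\<forall>A \<in> carrier_mat n n.
          (\<exists>Z12 \<in> carrier_mat p p. \<exists>Zh13 \<in> carrier_mat 0 0. \<exists>Zh32 \<in> carrier_mat (q - 0) (p - 0).
            S0inv * \<Phi> A * S0 =
              block3_mat p p q
                (0\<^sub>m p p) Z12 (four_block_mat Zh13 (0\<^sub>m 0 (q - 0)) (0\<^sub>m (p - 0) 0) (0\<^sub>m (p - 0) (q - 0)))
                (0\<^sub>m p p) (0\<^sub>m p p) (0\<^sub>m p q)
                (0\<^sub>m q p) (four_block_mat (0\<^sub>m 0 0) (0\<^sub>m 0 (p - 0)) (0\<^sub>m (q - 0) 0) Zh32) (0\<^sub>m q q))"
    proof
      fix A :: "'a mat" assume A: "A \<in> carrier_mat n n"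
      have eqA: "S0inv * \<Phi> A * S0 = PmT * (P * \<Phi> A * Q) * Pm"
      proof -
        have c1: "\<Phi> A \<in> carrier_mat l l" by (rule Pc[OF A])
        have "S0inv * \<Phi> A * S0 = PmT * (P * (\<Phi> A * (Q * Pm)))"
          unfolding S0_def S0inv_def using Qc Pmc PmTc Pc' c1
          by (simp only: assoc_mult_mat[OF PmTc Pc' c1] assoc_mult_mat[OF PmTc mult_carrier_mat[OF Pc' c1] mult_carrier_mat[OF Qc Pmc]]
              assoc_mult_mat[OF Pc' c1 mult_carrier_mat[OF Qc Pmc]])
        also have "\<dots> = PmT * (P * \<Phi> A * Q) * Pm"
          using Qc Pmc PmTc Pc' c1
          by (simp only: assoc_mult_mat[OF PmTc mult_carrier_mat[OF mult_carrier_mat[OF Pc' c1] Qc] Pmc]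
              assoc_mult_mat[OF mult_carrier_mat[OF Pc' c1] Qc Pmc] assoc_mult_mat[OF Pc' c1 mult_carrier_mat[OF Qc Pmc]])
        finally show ?thesis .
      qed
      have Nc: "S0inv * \<Phi> A * S0 \<in> carrier_mat l l"
        by (rule mult_carrier_mat[OF mult_carrier_mat[OF S0ic Pc[OF A]] S0c])
      show "\<exists>Z12 \<in> carrier_mat p p. \<exists>Zh13 \<in> carrier_mat 0 0. \<exists>Zh32 \<in> carrier_mat (q - 0) (p - 0).
            S0inv * \<Phi> A * S0 =
              block3_mat p p q
                (0\<^sub>m p p) Z12 (four_block_mat Zh13 (0\<^sub>m 0 (q - 0)) (0\<^sub>m (p - 0) 0) (0\<^sub>m (p - 0) (q - 0)))
                (0\<^sub>m p p) (0\<^sub>m p p) (0\<^sub>m p q)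
                (0\<^sub>m q p) (four_block_mat (0\<^sub>m 0 0) (0\<^sub>m 0 (p - 0)) (0\<^sub>m (q - 0) 0) Zh32) (0\<^sub>m q q)"
      proof (rule block_intro[OF Nc lpq])
        fix s t assume st: "s < l" "t < l" and na: "\<not> allowed p 0 0 s t"
        have "r \<le> pi s \<or> pi t < r" by (rule pz[OF st na])
        then have "(P * \<Phi> A * Q) $$ (pi s, pi t) = 0" using main[OF A pl[OF st(1)] pl[OF st(2)]] by blast
        then show "(S0inv * \<Phi> A * S0) $$ (s,t) = 0" unfolding eqA using ent[OF Tc[OF A] st] by simp
      qed auto
    qed
    have ex: "\<exists>S0 \<in> carrier_mat l l. \<exists>S0inv \<in> carrier_mat l l. S0 * S0inv = 1\<^sub>m l \<and> S0inv * S0 = 1\<^sub>m l \<and>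
        (\<forall>A \<in> carrier_mat n n.
          (\<exists>Z12 \<in> carrier_mat p p. \<exists>Zh13 \<in> carrier_mat 0 0. \<exists>Zh32 \<in> carrier_mat (q - 0) (p - 0).
            S0inv * \<Phi> A * S0 =
              block3_mat p p q
                (0\<^sub>m p p) Z12 (four_block_mat Zh13 (0\<^sub>m 0 (q - 0)) (0\<^sub>m (p - 0) 0) (0\<^sub>m (p - 0) (q - 0)))
                (0\<^sub>m p p) (0\<^sub>m p p) (0\<^sub>m p q)
                (0\<^sub>m q p) (four_block_mat (0\<^sub>m 0 0) (0\<^sub>m 0 (p - 0)) (0\<^sub>m (q - 0) 0) Zh32) (0\<^sub>m q q)))"
      apply (rule bexI[where x=S0], rule bexI[where x=S0inv])
        apply (rule conjI[OF I1 conjI[OF I2 form]])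
       apply (rule S0ic)
      apply (rule S0c)
      done
    have "2 * p + q = l" "(0::nat) \<le> p" "(0::nat) \<le> q" using lpq by auto
    with ex show ?thesis by blast
  qed
next
  have Pc: "\<And>A. A \<in> carrier_mat n n \<Longrightarrow> \<Phi> A \<in> carrier_mat l l"
    using lin unfolding linear_mat_map_def by auto
  assume ?R
  then obtain p q u v S0 S0inv where lpq: "2*p+q = l" and uv: "u \<le> p" "v \<le> q"
    and S0c: "S0 \<in> carrier_mat l l" and S0ic: "S0inv \<in> carrier_mat l l"
    and I1: "S0 * S0inv = 1\<^sub>m l" and I2: "S0inv * S0 = 1\<^sub>m l"
    and F: "\<forall>A \<in> carrier_mat n n.
          (\<exists>Z12 \<in> carrier_mat p p. \<exists>Zh13 \<in> carrier_mat u v. \<exists>Zh32 \<in> carrier_mat (q - v) (p - u).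
            S0inv * \<Phi> A * S0 =
              block3_mat p p q
                (0\<^sub>m p p) Z12 (four_block_mat Zh13 (0\<^sub>m u (q - v)) (0\<^sub>m (p - u) v) (0\<^sub>m (p - u) (q - v)))
                (0\<^sub>m p p) (0\<^sub>m p p) (0\<^sub>m p q)
                (0\<^sub>m q p) (four_block_mat (0\<^sub>m v u) (0\<^sub>m v (p - u)) (0\<^sub>m (q - v) u) Zh32) (0\<^sub>m q q))"
    by blast
  have pat: "allowed p u v s t" if A: "A \<in> carrier_mat n n" and st: "s < l" "t < l"
    and nz: "(S0inv * \<Phi> A * S0) $$ (s,t) \<noteq> 0" for A s t
  proof -
    from F A obtain Z12 Zh13 Zh32 where Z: "Z12 \<in> carrier_mat p p" "Zh13 \<in> carrier_mat u v" "Zh32 \<in> carrier_mat (q - v) (p - u)"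
      and eq: "S0inv * \<Phi> A * S0 =
              block3_mat p p q
                (0\<^sub>m p p) Z12 (four_block_mat Zh13 (0\<^sub>m u (q - v)) (0\<^sub>m (p - u) v) (0\<^sub>m (p - u) (q - v)))
                (0\<^sub>m p p) (0\<^sub>m p p) (0\<^sub>m p q)
                (0\<^sub>m q p) (four_block_mat (0\<^sub>m v u) (0\<^sub>m v (p - u)) (0\<^sub>m (q - v) u) Zh32) (0\<^sub>m q q)"
      by blast
    show ?thesis by (rule block_zero[OF Z uv eq _ _ nz]) (use st lpq in auto)
  qed
  have Nc: "S0inv * \<Phi> A * S0 \<in> carrier_mat l l" if "A \<in> carrier_mat n n" for A
    by (rule mult_carrier_mat[OF mult_carrier_mat[OF S0ic Pc[OF that]] S0c])
  have bk: "\<Phi> A = S0 * (S0inv * \<Phi> A * S0) * S0inv" if A: "A \<in> carrier_mat n n" for A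
    by (rule conj_back[OF S0c S0ic Pc[OF A] I1, symmetric])
  show ?L
  proof (intro ballI)
    fix X Y :: "'a mat" assume X: "X \<in> carrier_mat n n" and Y: "Y \<in> carrier_mat n n"
    define N1 where "N1 = S0inv * \<Phi> X * S0"
    define N2 where "N2 = S0inv * \<Phi> Y * S0"
    have N1c: "N1 \<in> carrier_mat l l" unfolding N1_def by (rule Nc[OF X])
    have N2c: "N2 \<in> carrier_mat l l" unfolding N2_def by (rule Nc[OF Y])
    have NN: "N1 * N2 = 0\<^sub>m l l"
      by (rule prod_zero[OF N1c N2c uv(1)]) (auto simp: N1_def N2_def intro: pat[OF X] pat[OF Y])
    have "\<Phi> X * \<Phi> Y = (S0 * N1 * S0inv) * (S0 * N2 * S0inv)"
      unfolding N1_def N2_def using bk[OF X] bk[OF Y] by simp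
    also have "\<dots> = S0 * (N1 * N2) * S0inv" by (rule conj_prod[OF S0c S0ic N1c N2c I2])
    also have "\<dots> = 0\<^sub>m l l" unfolding NN using S0c S0ic by simp
    finally show "\<Phi> X * \<Phi> Y = 0\<^sub>m l l" .
  qed
qed

end
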